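(* Let $(\Gamma_n)$ be a sequence of invertible $n\times n$ correlation matrices satisfying the Correlation Condition with bounding function $g$, and let $S=\sup_n\|\Gamma_n^{-1}\|_{\max}$. Fix $\alpha\ge1$. Then there is $n_0$ such that for all $n\ge n_0$ and every positive integer $q$, $$\sum_{y\in\mathcal{M}_{n,q}}\exp\big(-\log(\alpha n)\,y^T\Gamma_n y\big)\ \le\ \exp\big((2+S)\,g(\alpha)\big),$$ where $\mathcal{M}_{n,q}=\{y\in(\mathbb{Z}\cap[-q/2,q/2))^n:\ \|2\pi y/q\|_\infty\le 1/\sqrt q\}$.
   Context: $\|M\|_{\max}=\max_{a,b}|M_{ab}|$. Correlation Condition for a sequence $(\Gamma_n)$ of invertible $n\times n$ correlation matrices, with $\Psi_n=\Gamma_n^{-1}$: (i) $\sup_n\|\Psi_n\|_{\max}<\infty$; (ii) letting $\Psi_{n,k}$ be the principal submatrix of the first $k$ rows and columns of $\Psi_n$, partitioned as $\begin{bmatrix}\Psi^{(11)}_{n,k}&\Psi^{(12)}_{n,k}\\\Psi^{(21)}_{n,k}&\Psi^{(22)}_{n,k}\end{bmatrix}$ with $\Psi^{(11)}_{n,k}$ the leading $(k-1)\times(k-1)$ block and $\Psi^{(22)}_{n,k}$ the $(k,k)$ entry, define $a^{(n)}_1=(\Psi_n)_{11}^{-1}$ and $a^{(n)}_k=\big(\Psi^{(22)}_{n,k}-\Psi^{(21)}_{n,k}(\Psi^{(11)}_{n,k})^{-1}\Psi^{(12)}_{n,k}\big)^{-1}$ for $k\ge2$; then there is a monotone decreasing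 $g:[1,\infty)\to[0,\infty)$ independent of $n$ with $g(\alpha)\to0$ as $\alpha\to\infty$ and $\sup_n\sum_{k=1}^n(\alpha n)^{-a_k^{(n)}}\le g(\alpha)$ for all $\alpha\ge1$. *)

theory Defs
  imports "HOL-Analysis.Analysis" "Jordan_Normal_Form.Matrix"
begin

definition correlation_mat :: "nat \<Rightarrow> real mat \<Rightarrow> bool" where
  "correlation_mat n A \<longleftrightarrow> A \<in> carrier_mat n n \<and> A\<^sup>T = A \<and>
     (\<forall>i<n. A $$ (i,i) = 1) \<and> (\<forall>x \<in> carrier_vec n. 0 \<le> x \<bullet> (A *\<^sub>v x))"

definition mat_inv :: "real mat \<Rightarrow> real mat" where
  "mat_inv A = (THE B. B \<in> carrier_mat (dim_row A) (dim_row A) \<and>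
      A * B = 1\<^sub>m (dim_row A) \<and> B * A = 1\<^sub>m (dim_row A))"

definition max_norm :: "real mat \<Rightarrow> real" where
  "max_norm M = Max {\<bar>M $$ (a,b)\<bar> | a b. a < dim_row M \<and> b < dim_col M}"

definition lead_sub :: "nat \<Rightarrow> real mat \<Rightarrow> real mat" where
  "lead_sub k M = mat k k (\<lambda>(i,j). M $$ (i,j))"

text \<open>The quantities a_k (1-based k) from the Correlation Condition, for Psi = inverse of Gam.
  For k \<ge> 2, with Psi_{n,k} partitioned into the leading (k-1)x(k-1) block P11,
  the column P12, the row P21 and the (k,k) entry P22 (0-based index k-1),
  a_k = (P22 - P21 P11^{-1} P12)^{-1}.\<close>
definition a_coef :: "real mat \<Rightarrow> nat \<Rightarrow> real" where
  "a_coef Psi k =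
     (if k = 1 then inverse (Psi $$ (0,0))
      else inverse (Psi $$ (k-1,k-1)
        - vec (k-1) (\<lambda>j. Psi $$ (k-1, j)) \<bullet>
            (mat_inv (lead_sub (k-1) Psi) *\<^sub>v vec (k-1) (\<lambda>i. Psi $$ (i, k-1)))))"

definition correlation_condition :: "(nat \<Rightarrow> real mat) \<Rightarrow> (real \<Rightarrow> real) \<Rightarrow> bool" where
  "correlation_condition Gam g \<longleftrightarrow>
     (\<forall>n\<ge>1. correlation_mat n (Gam n) \<and> invertible_mat (Gam n)) \<and>
     bdd_above ((\<lambda>n. max_norm (mat_inv (Gam n))) ` {1..}) \<and>
     antimono_on {1..} g \<and> (\<forall>\<alpha>\<ge>1. 0 \<le> g \<alpha>) \<and> (g \<longlongrightarrow> 0) at_top \<and>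
     (\<forall>\<alpha>\<ge>1. \<forall>n\<ge>1. (\<Sum>k=1..n. (\<alpha> * real n) powr (- a_coef (mat_inv (Gam n)) k)) \<le> g \<alpha>)"

definition M_set :: "nat \<Rightarrow> nat \<Rightarrow> real vec set" where
  "M_set n q = {y \<in> carrier_vec n. (\<forall>i<n. y $ i \<in> \<int> \<and> - real q / 2 \<le> y $ i \<and> y $ i < real q / 2) \<and>
      (MAX i\<in>{0..<n}. \<bar>2 * pi * y $ i / real q\<bar>) \<le> 1 / sqrt (real q)}"

end

theory Submission
  imports Defs "Jordan_Normal_Form.Determinant"
begin


lemma geo_bound:
  fixes x :: real and A :: "nat set"
  assumes "finite A" "A \<subseteq> {m..}" "0 \<le> x" "x < 1"
  shows "(\<Sum>k\<in>A. x ^ k) \<le> x ^ m / (1 - x)"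
proof -
  define B where "B = (\<lambda>k. k - m) ` A"
  have AB: "A = (\<lambda>i. i + m) ` B" using assms(2) unfolding B_def by force
  have "(\<Sum>k\<in>A. x ^ k) = (\<Sum>i\<in>B. x ^ (i + m))"
    unfolding AB by (subst sum.reindex) (auto simp: inj_on_def)
  also have "\<dots> = x ^ m * (\<Sum>i\<in>B. x ^ i)" by (simp add: power_add sum_distrib_left mult.commute)
  also have "(\<Sum>i\<in>B. x ^ i) \<le> (\<Sum>i. x ^ i)"
    by (rule sum_le_suminf) (use assms in \<open>auto simp: B_def intro!: summable_geometric\<close>)
  also have "(\<Sum>i. x ^ i) = 1 / (1 - x)" using assms by (intro suminf_geometric) auto
  finally show ?thesis using assms by (simp add: mult_left_mono)
qed

lemma exp_le_half_lin: fixes z :: real assumes "0 \<le> z" "z \<le> 1" shows "exp (- z) \<le> 1 - z / 2"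
proof -
  have "1 + z \<le> exp z" by (rule exp_ge_add_one_self)
  hence "exp (-z) \<le> 1 / (1 + z)" using assms by (simp add: exp_minus divide_simps)
  also have "\<dots> \<le> 1 - z / 2"
  proof -
    have "z*z \<le> z*1" using assms by (intro mult_left_mono) auto
    moreover have "(1 - z/2)*(1+z) = 1 + z/2 - z*z/2" by (simp add: field_simps)
    ultimately have "1 \<le> (1 - z/2)*(1+z)" by linarith
    thus ?thesis using assms by (subst pos_divide_le_eq) auto
  qed
  finally show ?thesis .
qed

lemma t1: fixes u d :: real assumes "500 \<le> u" "1/4 < d" "d \<le> 1/2"
  shows "exp (- u * d^2) \<le> exp (- u / 16)"
proof -
  have "1/4 * (1/4) \<le> d * d" using assms by (intro mult_mono; linarith)
  hence "u * (1/16) \<le> u * d^2" using assms unfolding power2_eq_square by (intro mult_left_mono; linarith)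
  thus ?thesis by simp
qed
lemma t2: fixes u d :: real assumes "500 \<le> u" "1/4 < d" "d \<le> 1/2"
  shows "exp (- u * (1-d)^2) \<le> exp (- u / 16)"
proof -
  have "1/4 * (1/4) \<le> (1-d) * (1-d)" using assms by (intro mult_mono; linarith)
  hence "u * (1/16) \<le> u * (1-d)^2" using assms unfolding power2_eq_square by (intro mult_left_mono; linarith)
  thus ?thesis by simp
qed
lemma t3: fixes u :: real assumes "500 \<le> u" shows "exp (- u / 16) \<le> 1 / 2"
proof -
  have "exp (- u / 16) \<le> exp (- 1)" using assms by simp
  also have "exp (-1::real) \<le> 1/2"
  proof -
    have "2 \<le> exp (1::real)" using exp_ge_add_one_self[of 1] by simp
    thus ?thesis by (simp add: exp_minus divide_simps)
  qed
  finally show ?thesis .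
qed
lemma t4: "exp (1/2::real) \<le> 2"
proof -
  have "exp (1/2::real) * exp (1/2) = exp 1" by (simp add: exp_add[symmetric])
  also have "\<dots> \<le> 4" using exp_le by simp
  finally have "exp (1/2::real) ^ 2 \<le> 2 ^ 2" by (simp add: power2_eq_square)
  thus ?thesis by (rule power2_le_imp_le) simp
qed
lemma two_point:
  fixes u d :: real
  assumes u: "500 \<le> u" and d: "0 \<le> d" "d \<le> 1/2"
  shows "exp (- u * d^2) + exp (- u * (1 - d)^2) \<le> 1 + 2 * exp (- u)"
proof (cases "u * d \<le> 1/4")
  case True
  have h: "- u * (1 - d)^2 = - u + 2*(u*d) - u*d^2" by (simp add: power2_eq_square algebra_simps)
  have "u*d^2 \<ge> 0" using u by simp
  hence "- u * (1 - d)^2 \<le> - u + 1/2" using True h by linarith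
  hence e2: "exp (- u * (1 - d)^2) \<le> exp (- u + 1/2)" by (rule exp_mono)
  have e3: "exp (- u + 1/2) = exp (-u) * exp (1/2)" by (simp add: exp_add[symmetric])
  have e4: "exp (-u) * exp (1/2) \<le> exp (-u) * 2" using t4 by (intro mult_left_mono) (simp_all add: less_imp_le)
  have e5: "exp (- u * d^2) \<le> 1" using u by simp
  show ?thesis using e2 e3 e4 e5 by linarith
next
  case False
  show ?thesis
  proof (cases "d \<le> 1/4")
    case True
    have ud: "u * d^2 \<ge> 1 / (16 * u)"
    proof -
      have "1/4 * (1/4) \<le> (u*d) * (u*d)" using False u d by (intro mult_mono; linarith)
      hence "1 \<le> u * d^2 * (16 * u)" by (simp add: power2_eq_square algebra_simps)
      hence "1 / (16*u) \<le> u * d^2 * (16 * u) / (16 * u)" by (rule divide_right_mono) (use u in linarith)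
      thus ?thesis using u by simp
    qed
    have "exp (- u * d^2) \<le> exp (- (1 / (16 * u)))" using ud by simp
    also have "\<dots> \<le> 1 - (1 / (16 * u)) / 2" using exp_le_half_lin[of "1/(16*u)"] u by simp
    finally have e1: "exp (- u * d^2) \<le> 1 - 1 / (32 * u)" by simp
    have "3/4 * (3/4) \<le> (1-d) * (1-d)" using True by (intro mult_mono; linarith)
    hence "u * (9/16) \<le> u * (1-d)^2" using u unfolding power2_eq_square by (intro mult_left_mono; linarith)
    hence e6: "exp (- u * (1 - d)^2) \<le> exp (- (9/16 * u))" by simp
    have s1: "(1 + 9/32*u)^2 \<le> exp (9/32*u) ^ 2" using u by (intro power_mono) (rule exp_ge_add_one_self, linarith)
    have s2: "exp (9/32*u) ^ 2 = exp (9/16 * u)" by (simp add: power2_eq_square exp_add[symmetric])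
    have s3: "(1 + 9/32*u)^2 = 1 + 9/16*u + (81/1024)*(u*u)" by (simp add: power2_eq_square algebra_simps)
    have "500 * u \<le> u * u" using u by (intro mult_right_mono; linarith)
    hence s4: "(81/1024)*(u*u) \<ge> (81/1024) * (500 * u)" by (intro mult_left_mono) auto
    have s5: "32 * u \<le> exp (9/16 * u)" using s1 s2 s3 s4 u by linarith
    have "1 / exp (9/16 * u) \<le> 1 / (32 * u)" using s5 u by (intro divide_left_mono) auto
    hence "exp (- (9/16 * u)) \<le> 1 / (32 * u)" by (simp add: exp_minus inverse_eq_divide)
    thus ?thesis using e1 e6 exp_gt_zero[of "-u"] by linarith
  next
    case False
    have a: "exp (- u * d^2) \<le> exp (- u / 16)" using t1 False u d by simp
    have b: "exp (- u * (1-d)^2) \<le> exp (- u / 16)" using t2 False u d by simp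
    have "exp (- u / 16) \<le> 1 / 2" using t3 u by simp
    thus ?thesis using a b exp_gt_zero[of "-u"] by linarith
  qed
qed


lemma exp_neg_small: fixes u :: real assumes "500 \<le> u" shows "exp (- u) \<le> 1/2"
proof -
  have "exp (- u) \<le> exp (- 1)" using assms by simp
  also have "exp (-1::real) \<le> 1/2"
  proof -
    have "2 \<le> exp (1::real)" using exp_ge_add_one_self[of 1] by simp
    thus ?thesis by (simp add: exp_minus divide_simps)
  qed
  finally show ?thesis .
qed

lemma pts_pos:
  fixes u d :: real and J :: "int set"
  assumes u: "500 \<le> u" and d: "0 \<le> d" "d \<le> 1/2" and J: "finite J"
  shows "(\<Sum>K\<in>J. exp (- u * (of_int K + d)^2)) \<le> exp (3 * exp (- u))"
proof -
  define x where "x = exp (- u)"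
  have x0: "0 < x" unfolding x_def by simp
  have x1: "x \<le> 1/2" unfolding x_def using exp_neg_small u by simp
  define f where "f K = exp (- u * (of_int K + d)^2)" for K :: int
  have fnn: "0 \<le> f K" for K unfolding f_def by simp
  define J0 where "J0 = J \<inter> {-1,0}"
  define J1 where "J1 = J \<inter> {1..}"
  define J2 where "J2 = J \<inter> {..-2}"
  have JJ: "J = J0 \<union> (J1 \<union> J2)" unfolding J0_def J1_def J2_def by auto
  have "sum f J = sum f J0 + (sum f J1 + sum f J2)"
    unfolding JJ using J unfolding J0_def J1_def J2_def
    by (subst sum.union_disjoint; (auto intro!: sum.union_disjoint)?)
  moreover have "sum f J0 \<le> 1 + 2 * x"
  proof -
    have "sum f J0 \<le> sum f {-1,0}" unfolding J0_def by (intro sum_mono2) (auto simp: fnn)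
    also have "\<dots> = exp (- u * d^2) + exp (- u * (1 - d)^2)"
      by (simp add: f_def power2_commute)
    also have "\<dots> \<le> 1 + 2 * x" unfolding x_def using two_point u d by blast
    finally show ?thesis .
  qed
  moreover have "sum f J1 \<le> x + 2 * x^2"
  proof -
    have "sum f J1 \<le> (\<Sum>K\<in>J1. x ^ nat K)"
    proof (rule sum_mono)
      fix K assume "K \<in> J1"
      hence K: "1 \<le> K" unfolding J1_def by auto
      have "real_of_int K \<le> (of_int K + d) * 1" using d by simp
      also have "\<dots> \<le> (of_int K + d) * (of_int K + d)" using K d by (intro mult_left_mono) auto
      finally have "u * real_of_int K \<le> u * (of_int K + d)^2" using u
        by (intro mult_left_mono) (auto simp: power2_eq_square)
      hence "f K \<le> exp (- (real (nat K) * u))" unfolding f_def using K by (simp add: mult.commute)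
      also have "\<dots> = x ^ nat K" unfolding x_def by (subst exp_of_nat_mult[symmetric]) simp
      finally show "f K \<le> x ^ nat K" .
    qed
    also have "\<dots> = (\<Sum>k\<in>nat ` J1. x ^ k)"
      by (subst sum.reindex) (auto simp: inj_on_def J1_def)
    also have "\<dots> \<le> x ^ 1 / (1 - x)"
      by (rule geo_bound) (use J x0 x1 in \<open>auto simp: J1_def\<close>)
    also have "\<dots> \<le> x + 2 * x^2"
    proof -
      have "0 \<le> x^2 * (1 - 2*x)" using x0 x1 by (intro mult_nonneg_nonneg) auto
      hence "x \<le> (x + 2 * x^2) * (1 - x)" by (simp add: algebra_simps power2_eq_square power3_eq_cube)
      thus ?thesis using x1 by (subst pos_divide_le_eq) auto
    qed
    finally show ?thesis .
  qed
  moreover have "sum f J2 \<le> 2 * x^2"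
  proof -
    have "sum f J2 \<le> (\<Sum>K\<in>J2. x ^ nat (- K))"
    proof (rule sum_mono)
      fix K assume "K \<in> J2"
      hence K: "K \<le> -2" unfolding J2_def by auto
      define m where "m = - real_of_int K"
      have m2: "2 \<le> m" using K unfolding m_def by simp
      have "(m - 1/2)^2 \<le> (m - d)^2" using m2 d by (intro power_mono) auto
      moreover have "2 * m \<le> m * m" using m2 by (intro mult_right_mono) auto
      moreover have "(m - 1/2)^2 = m*m - m + 1/4" by (simp add: power2_eq_square algebra_simps)
      moreover have "(m - d)^2 = (of_int K + d)^2" unfolding m_def by (simp add: power2_eq_square algebra_simps)
      ultimately have "m \<le> (of_int K + d)^2" by linarith
      hence "u * m \<le> u * (of_int K + d)^2" using u by (intro mult_left_mono) auto
      hence "f K \<le> exp (- (real (nat (-K)) * u))" unfolding f_def m_def using K by (simp add: mult.commute)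
      also have "\<dots> = x ^ nat (-K)" unfolding x_def by (subst exp_of_nat_mult[symmetric]) simp
      finally show "f K \<le> x ^ nat (-K)" .
    qed
    also have "\<dots> = (\<Sum>k\<in>(\<lambda>K. nat (-K)) ` J2. x ^ k)"
      by (subst sum.reindex) (auto simp: inj_on_def J2_def)
    also have "\<dots> \<le> x ^ 2 / (1 - x)"
      by (rule geo_bound) (use J x0 x1 in \<open>auto simp: J2_def\<close>)
    also have "\<dots> \<le> 2 * x^2"
    proof -
      have "x^2 \<le> (2 * x^2) * (1 - x)" using x0 x1
        proof -
        have "0 \<le> x^2 * (1 - 2*x)" using x0 x1 by (intro mult_nonneg_nonneg) auto
        thus ?thesis by (simp add: algebra_simps power2_eq_square)
      qed
      thus ?thesis using x1 by (subst pos_divide_le_eq) auto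
    qed
    finally show ?thesis .
  qed
  ultimately have "sum f J \<le> 1 + 3 * x + 4 * x^2" by linarith
  also have "\<dots> \<le> exp (3 * x)"
  proof -
    have "1 + 3 * x + (3*x)^2 / 2 \<le> exp (3 * x)" using x0 by (intro exp_lower_Taylor_quadratic) auto
    moreover have "(3*x)^2 / 2 = 4.5 * x^2" by (simp add: power2_eq_square)
    moreover have "0 \<le> x^2" by simp
    ultimately show ?thesis by linarith
  qed
  finally show ?thesis unfolding f_def x_def .
qed

lemma pts_shift:
  fixes u t :: real and J :: "int set"
  assumes u: "500 \<le> u" and J: "finite J"
  shows "(\<Sum>j\<in>J. exp (- u * (of_int j + t)^2)) \<le> exp (3 * exp (- u))"
proof -
  define k0 where "k0 = \<lfloor>t + 1/2\<rfloor>"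
  define d where "d = t - of_int k0"
  have fc: "real_of_int k0 \<le> t + 1/2" "t + 1/2 < real_of_int k0 + 1"
    unfolding k0_def using floor_correct[of "t + 1/2"] by auto
  have d1a: "- 1/2 \<le> d" unfolding d_def using fc by linarith
  have d1b: "d < 1/2" unfolding d_def using fc by linarith
  note d1 = d1a d1b
  show ?thesis
  proof (cases "0 \<le> d")
    case True
    have "(\<Sum>j\<in>J. exp (- u * (of_int j + t)^2)) = (\<Sum>K\<in>(\<lambda>j. j + k0) ` J. exp (- u * (of_int K + d)^2))"
      by (subst sum.reindex) (auto simp: inj_on_def d_def)
    also have "\<dots> \<le> exp (3 * exp (- u))" using pts_pos[OF u True, of "(\<lambda>j. j + k0) ` J"] d1 J by auto
    finally show ?thesis .
  next
    case False
    have pw: "(of_int (- j - k0) + (-d))^2 = (of_int j + t)^2" for j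
    proof -
      have "of_int (- j - k0) + (-d) = - (of_int j + t)" by (simp add: d_def)
      hence "(of_int (- j - k0) + (-d))^2 = (- (of_int j + t))^2" by (rule arg_cong)
      thus ?thesis by (simp only: power2_minus)
    qed
    have "(\<Sum>j\<in>J. exp (- u * (of_int j + t)^2)) = (\<Sum>K\<in>(\<lambda>j. - j - k0) ` J. exp (- u * (of_int K + (-d))^2))"
      proof -
      have pw2: "(of_int (- j - k0) - d)^2 = (of_int j + t)^2" for j using pw[of j] by simp
      show ?thesis by (subst sum.reindex) (auto simp: inj_on_def pw2 simp del: of_int_diff of_int_minus)
    qed
    also have "\<dots> \<le> exp (3 * exp (- u))" using pts_pos[OF u _ _, of "-d" "(\<lambda>j. - j - k0) ` J"] False d1 J by auto
    finally show ?thesis .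
  qed
qed


definition tterm :: "(nat \<Rightarrow> real) \<Rightarrow> (nat \<Rightarrow> nat \<Rightarrow> real) \<Rightarrow> nat \<Rightarrow> (nat \<Rightarrow> int) \<Rightarrow> real" where
  "tterm u w k f = exp (- u k * (of_int (f k) + (\<Sum>i<k. w k i * of_int (f i)))^2)"

lemma tterm_upd: "k < m \<Longrightarrow> tterm u w k (f(m := j)) = tterm u w k f"
  unfolding tterm_def by (auto intro!: sum.cong)

lemma iter_bound:
  fixes u :: "nat \<Rightarrow> real" and w :: "nat \<Rightarrow> nat \<Rightarrow> real" and T :: "int set"
  assumes u: "\<And>k. k < m \<Longrightarrow> 500 \<le> u k" and T: "finite T"
  shows "(\<Sum>f\<in>Pi\<^sub>E {..<m} (\<lambda>_. T). \<Prod>k<m. tterm u w k f) \<le> (\<Prod>k<m. exp (3 * exp (- u k)))"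
  using u
proof (induction m)
  case 0
  then show ?case by simp
next
  case (Suc m)
  let ?P = "\<lambda>f. \<Prod>k<m. tterm u w k f"
  have fin: "finite (Pi\<^sub>E {..<m} (\<lambda>_. T))" using T by (intro finite_PiE) auto
  have "(\<Sum>f\<in>Pi\<^sub>E {..<Suc m} (\<lambda>_. T). \<Prod>k<Suc m. tterm u w k f)
      = (\<Sum>p\<in>T \<times> Pi\<^sub>E {..<m} (\<lambda>_. T). \<Prod>k<Suc m. tterm u w k ((\<lambda>(y, g). g(m := y)) p))"
    unfolding lessThan_Suc PiE_insert_eq
    by (subst sum.reindex) (auto intro!: inj_combinator)
  also have "\<dots> = (\<Sum>j\<in>T. \<Sum>f\<in>Pi\<^sub>E {..<m} (\<lambda>_. T). \<Prod>k<Suc m. tterm u w k (f(m := j)))"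
    by (subst sum.cartesian_product) (simp add: case_prod_beta)
  also have "\<dots> = (\<Sum>f\<in>Pi\<^sub>E {..<m} (\<lambda>_. T). \<Sum>j\<in>T. ?P f * tterm u w m (f(m := j)))"
    by (subst sum.swap) (simp add: tterm_upd)
  also have "\<dots> = (\<Sum>f\<in>Pi\<^sub>E {..<m} (\<lambda>_. T). ?P f * (\<Sum>j\<in>T. tterm u w m (f(m := j))))"
    by (simp add: sum_distrib_left)
  also have "\<dots> \<le> (\<Sum>f\<in>Pi\<^sub>E {..<m} (\<lambda>_. T). ?P f * exp (3 * exp (- u m)))"
  proof (rule sum_mono, rule mult_left_mono)
    fix f
    have "(\<Sum>j\<in>T. tterm u w m (f(m := j))) = (\<Sum>j\<in>T. exp (- u m * (of_int j + (\<Sum>i<m. w m i * of_int (f i)))^2))"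
      unfolding tterm_def by (auto intro!: sum.cong)
    also have "\<dots> \<le> exp (3 * exp (- u m))" using Suc.prems[of m] T by (intro pts_shift) auto
    finally show "(\<Sum>j\<in>T. tterm u w m (f(m := j))) \<le> exp (3 * exp (- u m))" .
    show "0 \<le> ?P f" unfolding tterm_def by (intro prod_nonneg) auto
  qed
  also have "\<dots> = (\<Sum>f\<in>Pi\<^sub>E {..<m} (\<lambda>_. T). ?P f) * exp (3 * exp (- u m))"
    by (simp add: sum_distrib_right)
  also have "\<dots> \<le> (\<Prod>k<m. exp (3 * exp (- u k))) * exp (3 * exp (- u m))"
    using Suc by (intro mult_right_mono) auto
  also have "\<dots> = (\<Prod>k<Suc m. exp (3 * exp (- u k)))" by simp
  finally show ?case .
qed



definition qf :: "nat \<Rightarrow> (nat \<Rightarrow> nat \<Rightarrow> real) \<Rightarrow> (nat \<Rightarrow> real) \<Rightarrow> (nat \<Rightarrow> real) \<Rightarrow> real" where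
  "qf n A x y = (\<Sum>i<n. x i * (\<Sum>j<n. A i j * y j))"

lemma qf_add_left: "qf n A (\<lambda>i. x i + x' i) y = qf n A x y + qf n A x' y"
  unfolding qf_def by (simp add: distrib_right sum.distrib)
lemma qf_add_right: "qf n A x (\<lambda>i. y i + y' i) = qf n A x y + qf n A x y'"
  unfolding qf_def by (simp add: distrib_left sum.distrib)
lemma qf_smult_left: "qf n A (\<lambda>i. t * x i) y = t * qf n A x y"
  unfolding qf_def by (simp add: sum_distrib_left mult.assoc)
lemma qf_smult_right: "qf n A x (\<lambda>i. t * y i) = t * qf n A x y"
  unfolding qf_def by (simp add: sum_distrib_left algebra_simps)
lemma qf_sym:
  assumes "\<And>i j. i < n \<Longrightarrow> j < n \<Longrightarrow> A i j = A j i"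
  shows "qf n A x y = qf n A y x"
proof -
  have "qf n A x y = (\<Sum>i<n. \<Sum>j<n. x i * A i j * y j)"
    unfolding qf_def by (simp add: sum_distrib_left mult.assoc)
  also have "\<dots> = (\<Sum>j<n. \<Sum>i<n. x i * A i j * y j)" by (rule sum.swap)
  also have "\<dots> = (\<Sum>j<n. \<Sum>i<n. y j * A j i * x i)"
    using assms by (intro sum.cong refl) (auto simp: mult.commute mult.left_commute)
  also have "\<dots> = qf n A y x" unfolding qf_def by (simp add: sum_distrib_left mult.assoc)
  finally show ?thesis .
qed

lemma qf_null:
  assumes sym: "\<And>i j. i < n \<Longrightarrow> j < n \<Longrightarrow> G i j = G j i"
    and psd: "\<And>x. 0 \<le> qf n G x x"
    and w0: "qf n G w w = 0"
    and i: "i < n"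
  shows "(\<Sum>j<n. G i j * w j) = 0"
proof -
  define z where "z i = (\<Sum>j<n. G i j * w j)" for i
  define b where "b = (\<Sum>i<n. z i * z i)"
  define c where "c = qf n G z z"
  have c0: "0 \<le> c" unfolding c_def by (rule psd)
  have zw: "qf n G z w = b" unfolding qf_def b_def z_def ..
  have wz: "qf n G w z = b" using qf_sym[of n G w z] sym zw by simp
  have expand: "qf n G (\<lambda>i. w i + t * z i) (\<lambda>i. w i + t * z i) = 2 * t * b + t * t * c" for t
    by (simp add: qf_add_left qf_add_right qf_smult_left qf_smult_right w0 zw wz c_def algebra_simps)
  have b0: "0 \<le> b" unfolding b_def by (intro sum_nonneg) auto
  have "b = 0"
  proof (rule ccontr)
    assume "b \<noteq> 0"
    hence bp: "0 < b" using b0 by simp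
    define th where "th = b / (c + 1)"
    have thp: "0 < th" unfolding th_def using bp c0 by simp
    have "th * c < b" unfolding th_def using bp c0 by (simp add: field_simps)
    hence "th * (- 2 * b + th * c) < 0" using thp bp by (intro mult_pos_neg) auto
    moreover have "0 \<le> 2 * (- th) * b + (- th) * (- th) * c"
      using psd[of "\<lambda>i. w i + (- th) * z i"] unfolding expand .
    ultimately show False by (simp add: algebra_simps)
  qed
  hence "\<forall>i\<in>{..<n}. z i * z i = 0" unfolding b_def
    by (subst sum_nonneg_eq_0_iff[symmetric]) auto
  thus ?thesis using i unfolding z_def by auto
qed


lemma quad_lower:
  fixes n :: nat and G P U :: "nat \<Rightarrow> nat \<Rightarrow> real" and s y :: "nat \<Rightarrow> real"
  assumes PG: "\<And>i l. i < n \<Longrightarrow> l < n \<Longrightarrow> (\<Sum>j<n. P i j * G j l) = (if i = l then 1 else 0)"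
    and Gsym: "\<And>i j. i < n \<Longrightarrow> j < n \<Longrightarrow> G i j = G j i"
    and Psym: "\<And>i j. i < n \<Longrightarrow> j < n \<Longrightarrow> P i j = P j i"
    and Ppsd: "\<And>x. 0 \<le> qf n P x x"
    and Usup: "\<And>k i. k < n \<Longrightarrow> k < i \<Longrightarrow> U k i = 0"
    and Udiag: "\<And>k. k < n \<Longrightarrow> U k k = 1"
    and Vz: "\<And>k i. k < n \<Longrightarrow> i < k \<Longrightarrow> (\<Sum>j<n. P i j * U k j) = 0"
    and Vd: "\<And>k. k < n \<Longrightarrow> (\<Sum>j<n. P k j * U k j) = s k"
    and sp: "\<And>k. k < n \<Longrightarrow> 0 < s k"
  shows "(\<Sum>k<n. (\<Sum>i<n. U k i * y i)^2 / s k) \<le> qf n G y y"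
proof -
  define z where "z i = (\<Sum>j<n. G i j * y j)" for i
  define V where "V l i = (\<Sum>j<n. P i j * U l j)" for l i
  define d where "d k = (\<Sum>i<n. U k i * y i)" for k
  define lam where "lam k = d k / s k" for k
  define u where "u i = (\<Sum>k<n. lam k * U k i)" for i
  have Pz: "(\<Sum>j<n. P i j * z j) = y i" if "i < n" for i
  proof -
    have "(\<Sum>j<n. P i j * z j) = (\<Sum>j<n. \<Sum>l<n. P i j * G j l * y l)"
      unfolding z_def by (simp add: sum_distrib_left mult.assoc)
    also have "\<dots> = (\<Sum>l<n. \<Sum>j<n. P i j * G j l * y l)" by (rule sum.swap)
    also have "\<dots> = (\<Sum>l<n. (\<Sum>j<n. P i j * G j l) * y l)" by (simp add: sum_distrib_right)
    also have "\<dots> = (\<Sum>l<n. (if i = l then y l else 0))" using PG that by (intro sum.cong) auto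
    also have "\<dots> = y i" using that by simp
    finally show ?thesis .
  qed
  have quz: "qf n P u z = (\<Sum>i<n. u i * y i)" unfolding qf_def using Pz by (intro sum.cong) auto
  have qzu: "qf n P z u = (\<Sum>i<n. u i * y i)" using qf_sym[of n P z u] Psym quz by simp
  have qzz: "qf n P z z = qf n G y y" unfolding qf_def using Pz
    by (auto simp: z_def mult.commute intro!: sum.cong)
  have "0 \<le> qf n P (\<lambda>i. u i + (-1) * z i) (\<lambda>i. u i + (-1) * z i)" by (rule Ppsd)
  also have "\<dots> = qf n P u u - 2 * (\<Sum>i<n. u i * y i) + qf n G y y"
  proof -
    have "qf n P (\<lambda>i. u i + (-1) * z i) (\<lambda>i. u i + (-1) * z i)
       = qf n P u u + (-1) * qf n P u z + ((-1) * qf n P z u + (-1) * ((-1) * qf n P z z))"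
      by (simp only: qf_add_left qf_add_right qf_smult_left qf_smult_right)
    thus ?thesis using quz qzu qzz by simp
  qed
  finally have main: "2 * (\<Sum>i<n. u i * y i) - qf n P u u \<le> qf n G y y" by simp
  have uy: "(\<Sum>i<n. u i * y i) = (\<Sum>k<n. lam k * d k)"
  proof -
    have "(\<Sum>i<n. u i * y i) = (\<Sum>i<n. \<Sum>k<n. lam k * U k i * y i)"
      unfolding u_def by (simp add: sum_distrib_right)
    also have "\<dots> = (\<Sum>k<n. \<Sum>i<n. lam k * U k i * y i)" by (rule sum.swap)
    also have "\<dots> = (\<Sum>k<n. lam k * d k)" unfolding d_def by (simp add: sum_distrib_left mult.assoc)
    finally show ?thesis .
  qed
  have E: "(\<Sum>i<n. U k i * V l i) = (if k = l then s k else 0)" if kl: "k < n" "l < n" for k l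
  proof -
    have tri: "(\<Sum>i<n. U a i * V b i) = 0" if "a < b" "b < n" for a b
    proof -
      have "U a i * V b i = 0" if "i < n" for i
      proof (cases "i \<le> a")
        case True thus ?thesis using \<open>a < b\<close> \<open>b < n\<close> Vz[of b i] by (simp add: V_def)
      next
        case False thus ?thesis using \<open>a < b\<close> \<open>b < n\<close> Usup[of a i] by simp
      qed
      thus ?thesis by (intro sum.neutral) auto
    qed
    consider "k < l" | "k = l" | "l < k" by linarith
    thus ?thesis
    proof cases
      case 1 thus ?thesis using tri kl by simp
    next
      case 2
      have "(\<Sum>i<n. U k i * V k i) = (\<Sum>i<n. if i = k then s k else 0)"
      proof (rule sum.cong)
        fix i assume "i \<in> {..<n}"
        consider "i < k" | "i = k" | "k < i" by linarith
        thus "U k i * V k i = (if i = k then s k else 0)"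
          by cases (use kl Vz Usup Udiag Vd in \<open>auto simp: V_def\<close>)
      qed simp
      thus ?thesis using 2 kl by simp
    next
      case 3
      have "(\<Sum>i<n. U k i * V l i) = (\<Sum>i<n. \<Sum>j<n. U k i * P i j * U l j)"
        unfolding V_def by (simp add: sum_distrib_left mult.assoc)
      also have "\<dots> = (\<Sum>j<n. \<Sum>i<n. U k i * P i j * U l j)" by (rule sum.swap)
      also have "\<dots> = (\<Sum>j<n. U l j * V k j)"
        unfolding V_def sum_distrib_left using Psym
        by (intro sum.cong refl) (auto simp: mult.commute mult.left_commute)
      also have "\<dots> = 0" using tri 3 kl by simp
      finally show ?thesis using 3 by simp
    qed
  qed
  have Pu: "(\<Sum>j<n. P i j * u j) = (\<Sum>l<n. lam l * V l i)" for i
  proof -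
    have "(\<Sum>j<n. P i j * u j) = (\<Sum>j<n. \<Sum>l<n. lam l * (P i j * U l j))"
      unfolding u_def by (simp add: sum_distrib_left mult.commute mult.left_commute)
    also have "\<dots> = (\<Sum>l<n. \<Sum>j<n. lam l * (P i j * U l j))" by (rule sum.swap)
    also have "\<dots> = (\<Sum>l<n. lam l * V l i)" unfolding V_def by (simp add: sum_distrib_left)
    finally show ?thesis .
  qed
  have quu: "qf n P u u = (\<Sum>k<n. lam k * lam k * s k)"
  proof -
    have "qf n P u u = (\<Sum>i<n. u i * (\<Sum>l<n. lam l * V l i))"
      unfolding qf_def Pu ..
    also have "\<dots> = (\<Sum>i<n. (\<Sum>k<n. lam k * U k i) * (\<Sum>l<n. lam l * V l i))"
      unfolding u_def ..
    also have "\<dots> = (\<Sum>i<n. \<Sum>k<n. \<Sum>l<n. lam k * lam l * (U k i * V l i))"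
      by (simp only: sum_product) (simp add: mult_ac)
    also have "\<dots> = (\<Sum>k<n. \<Sum>l<n. \<Sum>i<n. lam k * lam l * (U k i * V l i))"
    proof -
      have "(\<Sum>i<n. \<Sum>k<n. \<Sum>l<n. lam k * lam l * (U k i * V l i))
          = (\<Sum>k<n. \<Sum>i<n. \<Sum>l<n. lam k * lam l * (U k i * V l i))" by (rule sum.swap)
      also have "\<dots> = (\<Sum>k<n. \<Sum>l<n. \<Sum>i<n. lam k * lam l * (U k i * V l i))"
        by (rule sum.cong[OF refl]) (rule sum.swap)
      finally show ?thesis .
    qed
    also have "\<dots> = (\<Sum>k<n. \<Sum>l<n. lam k * lam l * (if k = l then s k else 0))"
      by (intro sum.cong refl) (simp add: E sum_distrib_left[symmetric])
    also have "\<dots> = (\<Sum>k<n. lam k * lam k * s k)"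
    proof (intro sum.cong refl)
      fix k assume k: "k \<in> {..<n}"
      have "(\<Sum>l<n. lam k * lam l * (if k = l then s k else 0)) = (\<Sum>l<n. if k = l then lam k * lam k * s k else 0)"
        by (intro sum.cong refl) auto
      also have "\<dots> = lam k * lam k * s k" using k by simp
      finally show "(\<Sum>l<n. lam k * lam l * (if k = l then s k else 0)) = lam k * lam k * s k" .
    qed
    finally show ?thesis .
  qed
  have "(\<Sum>k<n. d k ^ 2 / s k) = 2 * (\<Sum>k<n. lam k * d k) - (\<Sum>k<n. lam k * lam k * s k)"
  proof -
    have "(\<Sum>k<n. d k ^ 2 / s k) = (\<Sum>k<n. 2 * (lam k * d k) - lam k * lam k * s k)"
      using sp by (intro sum.cong refl) (auto simp: lam_def power2_eq_square field_simps)
    thus ?thesis by (simp add: sum_subtractf sum_distrib_left)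
  qed
  thus ?thesis using main uy quu unfolding d_def by simp
qed



lemma vec_qf:
  assumes A: "A \<in> carrier_mat n n" and v: "v \<in> carrier_vec n" and w: "w \<in> carrier_vec n"
  shows "v \<bullet> (A *\<^sub>v w) = qf n (\<lambda>i j. A $$ (i,j)) (\<lambda>i. v $ i) (\<lambda>i. w $ i)"
  using A v w unfolding qf_def
  by (auto simp: scalar_prod_def atLeast0LessThan intro!: sum.cong)

lemma mat_mult_sum:
  assumes A: "A \<in> carrier_mat n n" and B: "B \<in> carrier_mat n n" and i: "i < n" and l: "l < n"
  shows "(A * B) $$ (i,l) = (\<Sum>j<n. A $$ (i,j) * B $$ (j,l))"
  using A B i l by (auto simp: scalar_prod_def atLeast0LessThan intro!: sum.cong)

lemma mat_inv_eq:
  assumes A: "A \<in> carrier_mat n n" and B: "B \<in> carrier_mat n n"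
    and AB: "A * B = 1\<^sub>m n" and BA: "B * A = 1\<^sub>m n"
  shows "mat_inv A = B"
  unfolding mat_inv_def
proof (rule the_equality)
  show "B \<in> carrier_mat (dim_row A) (dim_row A) \<and> A * B = 1\<^sub>m (dim_row A) \<and> B * A = 1\<^sub>m (dim_row A)"
    using A B AB BA by auto
next
  fix C assume C: "C \<in> carrier_mat (dim_row A) (dim_row A) \<and> A * C = 1\<^sub>m (dim_row A) \<and> C * A = 1\<^sub>m (dim_row A)"
  hence C': "C \<in> carrier_mat n n" "C * A = 1\<^sub>m n" using A by auto
  have "C * (A * B) = C" using C'(1) unfolding AB by simp
  hence "C = C * (A * B)" by simp
  also have "\<dots> = (C * A) * B" by (rule assoc_mult_mat[symmetric, OF C'(1) A B])
  also have "\<dots> = B" using C' B by simp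
  finally show "C = B" .
qed

lemma inv_props:
  assumes Ga: "Gm \<in> carrier_mat n n" and sym: "Gm\<^sup>T = Gm" and inv: "invertible_mat Gm"
  shows "mat_inv Gm \<in> carrier_mat n n \<and> Gm * mat_inv Gm = 1\<^sub>m n \<and> mat_inv Gm * Gm = 1\<^sub>m n
     \<and> (mat_inv Gm)\<^sup>T = mat_inv Gm"
proof -
  obtain B where AB: "Gm * B = 1\<^sub>m n" and BA: "B * Gm = 1\<^sub>m (dim_row B)"
    using inv Ga unfolding invertible_mat_def inverts_mat_def by auto
  have "dim_col B = n" using arg_cong[OF AB, of dim_col] by simp
  moreover have "dim_row B = n" using arg_cong[OF BA, of dim_col] Ga by simp
  ultimately have B: "B \<in> carrier_mat n n" by auto
  have BA': "B * Gm = 1\<^sub>m n" using BA B by simp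
  have mi: "mat_inv Gm = B" by (rule mat_inv_eq[OF Ga B AB BA'])
  have "Gm * B\<^sup>T = 1\<^sub>m n"
  proof -
    have "(B * Gm)\<^sup>T = Gm\<^sup>T * B\<^sup>T" using B Ga by (simp add: transpose_mult)
    thus ?thesis using BA' sym by simp
  qed
  moreover have "B\<^sup>T * Gm = 1\<^sub>m n"
  proof -
    have "(Gm * B)\<^sup>T = B\<^sup>T * Gm\<^sup>T" using B Ga by (simp add: transpose_mult)
    thus ?thesis using AB sym by simp
  qed
  ultimately have "mat_inv Gm = B\<^sup>T" using Ga B by (intro mat_inv_eq) auto
  thus ?thesis using mi B AB BA' by auto
qed


lemma sum_lessThan_restrict:
  fixes k n :: nat and f :: "nat \<Rightarrow> 'b :: comm_monoid_add"
  assumes "k \<le> n" "\<And>i. k \<le> i \<Longrightarrow> i < n \<Longrightarrow> f i = 0"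
  shows "(\<Sum>i<n. f i) = (\<Sum>i<k. f i)"
  using assms by (intro sum.mono_neutral_right) auto

lemma lead_sub_carrier: "lead_sub k A \<in> carrier_mat k k"
  unfolding lead_sub_def by simp

lemma lead_sub_index: "i < k \<Longrightarrow> j < k \<Longrightarrow> lead_sub k A $$ (i,j) = A $$ (i,j)"
  unfolding lead_sub_def by simp

lemma lead_inv:
  assumes kn: "k \<le> n"
    and pd: "\<And>x. qf n (\<lambda>i j. Psi $$ (i,j)) x x = 0 \<Longrightarrow> (\<forall>i<n. x i = 0)"
  shows "lead_sub k Psi * mat_inv (lead_sub k Psi) = 1\<^sub>m k \<and> mat_inv (lead_sub k Psi) \<in> carrier_mat k k"
proof -
  define M where "M = lead_sub k Psi"
  have M: "M \<in> carrier_mat k k" unfolding M_def by (rule lead_sub_carrier)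
  have nz: "\<not> (\<exists>v. v \<in> carrier_vec k \<and> v \<noteq> 0\<^sub>v k \<and> M *\<^sub>v v = 0\<^sub>v k)"
  proof
    assume "\<exists>v. v \<in> carrier_vec k \<and> v \<noteq> 0\<^sub>v k \<and> M *\<^sub>v v = 0\<^sub>v k"
    then obtain v where v: "v \<in> carrier_vec k" "v \<noteq> 0\<^sub>v k" "M *\<^sub>v v = 0\<^sub>v k"
      by auto
    define x where "x i = (if i < k then v $ i else 0)" for i
    have "qf n (\<lambda>i j. Psi $$ (i,j)) x x = (\<Sum>i<k. x i * (\<Sum>j<n. Psi $$ (i,j) * x j))"
      unfolding qf_def using kn by (intro sum_lessThan_restrict) (auto simp: x_def)
    also have "\<dots> = (\<Sum>i<k. x i * (\<Sum>j<k. Psi $$ (i,j) * x j))"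
      using kn by (intro sum.cong refl arg_cong2[where f="(*)"] sum_lessThan_restrict) (auto simp: x_def)
    also have "\<dots> = qf k (\<lambda>i j. M $$ (i,j)) (\<lambda>i. v $ i) (\<lambda>i. v $ i)"
      unfolding qf_def M_def by (intro sum.cong refl) (auto simp: x_def lead_sub_index intro!: sum.cong)
    also have "\<dots> = v \<bullet> (M *\<^sub>v v)" using vec_qf[OF M v(1) v(1)] by simp
    also have "\<dots> = 0" using v by simp
    finally have "\<forall>i<n. x i = 0" by (rule pd)
    hence "v $ i = 0" if "i < k" for i using that kn unfolding x_def by (metis less_le_trans)
    hence "v = 0\<^sub>v k" using v(1) by (intro eq_vecI) auto
    with v(2) show False by simp
  qed
  have "M \<in> Units (ring_mat TYPE(real) k ())"
    using det_non_zero_imp_unit[OF M, of "()"] nz det_0_iff_vec_prod_zero_field[OF M] by blast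
  then obtain B where B: "B \<in> carrier_mat k k" "B * M = 1\<^sub>m k" "M * B = 1\<^sub>m k"
    unfolding Units_def ring_mat_def by auto
  have "mat_inv M = B" by (rule mat_inv_eq[OF M B(1) B(3) B(2)])
  thus ?thesis using B unfolding M_def by simp
qed


lemma qf_cong: "(\<And>i. i < n \<Longrightarrow> x i = x' i) \<Longrightarrow> (\<And>i. i < n \<Longrightarrow> y i = y' i) \<Longrightarrow> qf n A x y = qf n A x' y'"
  unfolding qf_def by (auto intro!: sum.cong)

lemma mat_vec_sum: "A \<in> carrier_mat k k \<Longrightarrow> v \<in> carrier_vec k \<Longrightarrow> i < k \<Longrightarrow> (A *\<^sub>v v) $ i = (\<Sum>j<k. A $$ (i,j) * v $ j)"
  by (auto simp: scalar_prod_def atLeast0LessThan intro!: sum.cong)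

lemma quad_bound_mat:
  fixes Gm :: "real mat"
  assumes cm: "correlation_mat n Gm" and inv: "invertible_mat Gm"
    and apos: "\<And>k. 1 \<le> k \<Longrightarrow> k \<le> n \<Longrightarrow> 0 < a_coef (mat_inv Gm) k"
  shows "\<exists>U. \<forall>y \<in> carrier_vec n. (\<Sum>k<n. a_coef (mat_inv Gm) (Suc k) * (y $ k + (\<Sum>i<k. U k i * y $ i))^2) \<le> y \<bullet> (Gm *\<^sub>v y)"
proof -
  define Psi where "Psi = mat_inv Gm"
  from cm have Ga: "Gm \<in> carrier_mat n n" "Gm\<^sup>T = Gm" "\<forall>x\<in>carrier_vec n. 0 \<le> x \<bullet> (Gm *\<^sub>v x)"
    unfolding correlation_mat_def by auto
  from inv_props[OF Ga(1,2) inv] have Pc: "Psi \<in> carrier_mat n n" and GP: "Gm * Psi = 1\<^sub>m n"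
    and PG: "Psi * Gm = 1\<^sub>m n" and PT: "Psi\<^sup>T = Psi" unfolding Psi_def by auto
  define G where "G i j = Gm $$ (i,j)" for i j
  define P where "P i j = Psi $$ (i,j)" for i j
  have PGs: "(\<Sum>j<n. P i j * G j l) = (if i = l then 1 else 0)" if "i < n" "l < n" for i l
    using mat_mult_sum[OF Pc Ga(1) that] PG that unfolding P_def G_def by simp
  have GPs: "(\<Sum>j<n. G i j * P j l) = (if i = l then 1 else 0)" if "i < n" "l < n" for i l
    using mat_mult_sum[OF Ga(1) Pc that] GP that unfolding P_def G_def by simp
  have Gsym: "G i j = G j i" if "i < n" "j < n" for i j
  proof -
    have "Gm\<^sup>T $$ (i,j) = Gm $$ (j,i)" using Ga(1) that by simp
    thus ?thesis using Ga(2) unfolding G_def by simp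
  qed
  have Psym: "P i j = P j i" if "i < n" "j < n" for i j
  proof -
    have "Psi\<^sup>T $$ (i,j) = Psi $$ (j,i)" using Pc that by simp
    thus ?thesis using PT unfolding P_def by simp
  qed
  have Gpsd: "0 \<le> qf n G x x" for x
  proof -
    have "0 \<le> vec n x \<bullet> (Gm *\<^sub>v vec n x)" using Ga(3) by auto
    also have "\<dots> = qf n G (\<lambda>i. vec n x $ i) (\<lambda>i. vec n x $ i)"
      using vec_qf[OF Ga(1), of "vec n x" "vec n x"] unfolding G_def by auto
    also have "\<dots> = qf n G x x" by (intro qf_cong) auto
    finally show ?thesis .
  qed
  have Pw: "qf n P x x = qf n G (\<lambda>i. \<Sum>j<n. P i j * x j) (\<lambda>i. \<Sum>j<n. P i j * x j)"
     and Gw: "\<And>i. i < n \<Longrightarrow> (\<Sum>j<n. G i j * (\<Sum>l<n. P j l * x l)) = x i" for x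
  proof -
    define w where "w i = (\<Sum>j<n. P i j * x j)" for i
    have Gw: "(\<Sum>j<n. G i j * w j) = x i" if "i < n" for i
    proof -
      have "(\<Sum>j<n. G i j * w j) = (\<Sum>j<n. \<Sum>l<n. G i j * P j l * x l)"
        unfolding w_def by (simp add: sum_distrib_left mult.assoc)
      also have "\<dots> = (\<Sum>l<n. \<Sum>j<n. G i j * P j l * x l)" by (rule sum.swap)
      also have "\<dots> = (\<Sum>l<n. (\<Sum>j<n. G i j * P j l) * x l)" by (simp add: sum_distrib_right)
      also have "\<dots> = (\<Sum>l<n. if i = l then x l else 0)" using GPs that by (intro sum.cong) auto
      also have "\<dots> = x i" using that by simp
      finally show ?thesis .
    qed
    show "\<And>i. i < n \<Longrightarrow> (\<Sum>j<n. G i j * (\<Sum>l<n. P j l * x l)) = x i" using Gw unfolding w_def by simp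
    have "qf n P x x = (\<Sum>i<n. x i * w i)" unfolding qf_def w_def ..
    also have "\<dots> = qf n G w w" unfolding qf_def using Gw by (auto simp: mult.commute intro!: sum.cong)
    finally show "qf n P x x = qf n G (\<lambda>i. \<Sum>j<n. P i j * x j) (\<lambda>i. \<Sum>j<n. P i j * x j)"
      unfolding w_def by simp
  qed
  have Ppsd: "0 \<le> qf n P x x" for x using Pw[of x] Gpsd by simp
  have Ppd: "\<forall>i<n. x i = 0" if "qf n P x x = 0" for x
  proof (intro allI impI)
    fix i assume i: "i < n"
    have "(\<Sum>j<n. G i j * (\<Sum>l<n. P j l * x l)) = 0"
      using that Pw[of x] by (intro qf_null[OF Gsym Gpsd _ i]) auto
    thus "x i = 0" using Gw[OF i] by simp
  qed
  have Ppd': "\<forall>i<n. x i = 0" if "qf n (\<lambda>i j. Psi $$ (i,j)) x x = 0" for x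
    using Ppd[of x] that unfolding P_def by simp
  define c where "c k = mat_inv (lead_sub k Psi) *\<^sub>v vec k (\<lambda>i. Psi $$ (i,k))" for k
  define U where "U k i = (if i < k then - (c k $ i) else if i = k then 1 else 0)" for k i
  define s where "s k = inverse (a_coef Psi (Suc k))" for k
  have ck: "c k \<in> carrier_vec k" if "k < n" for k
    using lead_inv[of k n Psi] Ppd' that unfolding c_def by auto
  have Usup: "U k i = 0" if "k < i" for k i using that unfolding U_def by auto
  have Udiag: "U k k = 1" for k unfolding U_def by auto
  have Usum: "(\<Sum>j<n. f j * U k j) = f k - (\<Sum>j<k. f j * c k $ j)" if "k < n" for f k
  proof -
    have "(\<Sum>j<n. f j * U k j) = (\<Sum>j<Suc k. f j * U k j)"
      using that by (intro sum_lessThan_restrict) (auto simp: Usup)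
    also have "\<dots> = (\<Sum>j<k. f j * U k j) + f k" by (simp add: Udiag)
    also have "(\<Sum>j<k. f j * U k j) = - (\<Sum>j<k. f j * c k $ j)"
      by (simp add: U_def sum_negf[symmetric])
    finally show ?thesis by simp
  qed
  have Mc: "(\<Sum>j<k. P i j * c k $ j) = P i k" if "k < n" "i < k" for i k
  proof -
    have li: "lead_sub k Psi * mat_inv (lead_sub k Psi) = 1\<^sub>m k" "mat_inv (lead_sub k Psi) \<in> carrier_mat k k"
      using lead_inv[of k n Psi] Ppd' that by auto
    have col: "vec k (\<lambda>i. Psi $$ (i,k)) \<in> carrier_vec k" by simp
    have "(\<Sum>j<k. P i j * c k $ j) = (lead_sub k Psi *\<^sub>v c k) $ i"
      using that li unfolding c_def P_def
      by (subst mat_vec_sum[OF lead_sub_carrier]) (auto simp: lead_sub_index intro!: sum.cong)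
    also have "lead_sub k Psi *\<^sub>v c k = (lead_sub k Psi * mat_inv (lead_sub k Psi)) *\<^sub>v vec k (\<lambda>i. Psi $$ (i,k))"
      unfolding c_def using li lead_sub_carrier col by (subst assoc_mult_mat_vec) auto
    also have "\<dots> = vec k (\<lambda>i. Psi $$ (i,k))" using li by simp
    finally show ?thesis using that unfolding P_def by simp
  qed
  have Vz: "(\<Sum>j<n. P i j * U k j) = 0" if "k < n" "i < k" for k i
    using Usum[OF that(1)] Mc[OF that] by simp
  have Vd: "(\<Sum>j<n. P k j * U k j) = s k" if "k < n" for k
  proof (cases "k = 0")
    case True
    thus ?thesis using Usum[OF that, of "P k"] unfolding s_def a_coef_def P_def by simp
  next
    case False
    have "vec k (\<lambda>j. Psi $$ (k, j)) \<bullet> c k = (\<Sum>j<k. P k j * c k $ j)"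
      using ck[OF that] unfolding P_def scalar_prod_def by (auto simp: atLeast0LessThan intro!: sum.cong)
    thus ?thesis using Usum[OF that, of "P k"] False unfolding s_def a_coef_def by (simp add: P_def c_def)
  qed
  have sp: "0 < s k" if "k < n" for k using apos[of "Suc k"] that unfolding s_def Psi_def by simp
  have main: "(\<Sum>k<n. (\<Sum>i<n. U k i * y i)^2 / s k) \<le> qf n G y y" for y
    by (rule quad_lower[OF PGs Gsym Psym Ppsd Usup Udiag Vz Vd sp])
  show ?thesis
  proof (intro exI ballI)
    fix y :: "real Matrix.vec" assume y: "y \<in> carrier_vec n"
    have "(\<Sum>k<n. a_coef (mat_inv Gm) (Suc k) * (y $ k + (\<Sum>i<k. U k i * y $ i))^2)
        = (\<Sum>k<n. (\<Sum>i<n. U k i * y $ i)^2 / s k)"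
    proof (intro sum.cong refl)
      fix k assume k: "k \<in> {..<n}"
      have "(\<Sum>i<n. U k i * y $ i) = (\<Sum>i<Suc k. U k i * y $ i)"
        using k by (intro sum_lessThan_restrict) (auto simp: Usup)
      also have "\<dots> = y $ k + (\<Sum>i<k. U k i * y $ i)" by (simp add: Udiag)
      finally show "a_coef (mat_inv Gm) (Suc k) * (y $ k + (\<Sum>i<k. U k i * y $ i))^2
          = (\<Sum>i<n. U k i * y $ i)^2 / s k"
        unfolding s_def Psi_def by (simp add: divide_inverse mult.commute)
    qed
    also have "\<dots> \<le> qf n G (\<lambda>i. y $ i) (\<lambda>i. y $ i)" by (rule main)
    also have "\<dots> = y \<bullet> (Gm *\<^sub>v y)" using vec_qf[OF Ga(1) y y] unfolding G_def by simp
    finally show "(\<Sum>k<n. a_coef (mat_inv Gm) (Suc k) * (y $ k + (\<Sum>i<k. U k i * y $ i))^2) \<le> y \<bullet> (Gm *\<^sub>v y)" .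
  qed
qed



lemma S_ge_1:
  assumes cc: "correlation_condition Gam g"
  shows "1 \<le> (SUP n\<in>{1..}. max_norm (mat_inv (Gam n)))"
proof -
  have c1: "correlation_mat 1 (Gam 1)" and bdd: "bdd_above ((\<lambda>n. max_norm (mat_inv (Gam n))) ` {1..})"
    using cc unfolding correlation_condition_def by auto
  have G1: "Gam 1 = 1\<^sub>m 1"
    using c1 unfolding correlation_mat_def by (intro eq_matI) auto
  have "mat_inv (1\<^sub>m 1 :: real mat) = 1\<^sub>m 1" by (rule mat_inv_eq) auto
  moreover have "{\<bar>(1\<^sub>m 1 :: real mat) $$ (a,b)\<bar> | a b. a < dim_row (1\<^sub>m 1 :: real mat) \<and> b < dim_col (1\<^sub>m 1 :: real mat)} = {1}"
    by auto
  ultimately have "max_norm (mat_inv (Gam 1)) = 1" unfolding G1 max_norm_def by simp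
  moreover have "max_norm (mat_inv (Gam 1)) \<le> (SUP n\<in>{1..}. max_norm (mat_inv (Gam n)))"
    by (rule cSUP_upper[OF _ bdd]) auto
  ultimately show ?thesis by simp
qed

lemma M_set_sub:
  "M_set n q \<subseteq> (\<lambda>f. vec n (\<lambda>i. real_of_int (f i))) ` Pi\<^sub>E {..<n} (\<lambda>_. {- int q..int q})"
proof
  fix y assume y: "y \<in> M_set n q"
  hence yc: "y \<in> carrier_vec n" and yi: "\<And>i. i < n \<Longrightarrow> y $ i \<in> \<int> \<and> - real q / 2 \<le> y $ i \<and> y $ i < real q / 2"
    unfolding M_set_def by auto
  define f where "f = restrict (\<lambda>i. \<lfloor>y $ i\<rfloor>) {..<n}"
  have fy: "real_of_int \<lfloor>y $ i\<rfloor> = y $ i" if "i < n" for i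
  proof -
    have "y $ i \<in> \<int>" using yi[OF that] by simp
    then obtain m where "y $ i = of_int m" by (auto elim: Ints_cases)
    thus ?thesis by simp
  qed
  have "f \<in> Pi\<^sub>E {..<n} (\<lambda>_. {- int q..int q})"
  proof -
    have "\<lfloor>y $ i\<rfloor> \<in> {- int q..int q}" if "i < n" for i
    proof -
      have "- real q \<le> y $ i" "y $ i \<le> real q" using yi[OF that] by auto
      hence "- real q \<le> real_of_int \<lfloor>y $ i\<rfloor>" "real_of_int \<lfloor>y $ i\<rfloor> \<le> real q" using fy[OF that] by auto
      thus ?thesis by simp
    qed
    thus ?thesis unfolding f_def by auto
  qed
  moreover have "y = vec n (\<lambda>i. real_of_int (f i))"
  proof (rule eq_vecI)
    fix i assume i: "i < dim_vec (vec n (\<lambda>i. real_of_int (f i)))"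
    hence i': "i < n" by simp
    have "vec n (\<lambda>i. real_of_int (f i)) $ i = real_of_int \<lfloor>y $ i\<rfloor>" using i' by (simp add: f_def)
    also have "\<dots> = y $ i" by (rule fy[OF i'])
    finally show "y $ i = vec n (\<lambda>i. real_of_int (f i)) $ i" by simp
  qed (use yc in simp)
  ultimately show "y \<in> (\<lambda>f. vec n (\<lambda>i. real_of_int (f i))) ` Pi\<^sub>E {..<n} (\<lambda>_. {- int q..int q})" by blast
qed

lemma ln_le_2ln:
  fixes A x :: real
  assumes "1 \<le> A" "A \<le> real n" "1 \<le> x" "2 \<le> n"
  shows "ln (A * real n) \<le> 2 * ln (x * real n)"
proof -
  have "ln (A * real n) \<le> ln (real n * real n)" using assms by (intro ln_mono mult_right_mono) auto
  also have "\<dots> = 2 * ln (real n)" using assms by (simp add: ln_mult)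
  also have "\<dots> \<le> 2 * ln (x * real n)" using assms by (intro mult_left_mono ln_mono) auto
  finally show ?thesis .
qed

theorem mainTheorem6:
  fixes Gam :: "nat \<Rightarrow> real mat" and g :: "real \<Rightarrow> real" and \<alpha> S :: real
  assumes "correlation_condition Gam g"
    and "S = (SUP n\<in>{1..}. max_norm (mat_inv (Gam n)))"
    and "\<alpha> \<ge> 1"
  shows "\<exists>n0. \<forall>n\<ge>n0. \<forall>q::nat. q > 0 \<longrightarrow>
     (\<Sum>y\<in>M_set n q. exp (- ln (\<alpha> * real n) * (y \<bullet> (Gam n *\<^sub>v y))))
       \<le> exp ((2 + S) * g \<alpha>)"
proof -
  have cc1: "\<And>n. 1 \<le> n \<Longrightarrow> correlation_mat n (Gam n) \<and> invertible_mat (Gam n)"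
    and gnn: "\<And>x. 1 \<le> x \<Longrightarrow> 0 \<le> g x"
    and glim: "(g \<longlongrightarrow> 0) at_top"
    and gsum: "\<And>x n. 1 \<le> x \<Longrightarrow> 1 \<le> n \<Longrightarrow> (\<Sum>k=1..n. (x * real n) powr (- a_coef (mat_inv (Gam n)) k)) \<le> g x"
    using assms(1) unfolding correlation_condition_def by auto
  have S1: "1 \<le> S" using S_ge_1[OF assms(1)] assms(2) by simp
  have "eventually (\<lambda>x. g x < exp (-1000)) at_top"
    using order_tendstoD(2)[OF glim, of "exp (-1000)"] by simp
  then obtain N where N: "\<And>x. N \<le> x \<Longrightarrow> g x < exp (-1000)" unfolding eventually_at_top_linorder by auto
  define A where "A = max N 1"
  have A1: "1 \<le> A" and gA: "g A < exp (-1000)" using N unfolding A_def by auto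
  define n0 where "n0 = nat \<lceil>A\<rceil> + 2"
  show ?thesis
  proof (intro exI allI impI)
    fix n q :: nat assume n: "n0 \<le> n" and q: "0 < q"
    have n2: "2 \<le> n" using n unfolding n0_def by simp
    have An: "A \<le> real n" using n unfolding n0_def by linarith
    define Psi where "Psi = mat_inv (Gam n)"
    define a where "a k = a_coef Psi k" for k
    define L where "L = ln (\<alpha> * real n)"
    have "1 * real n \<le> \<alpha> * real n" using assms(3) by (intro mult_right_mono) auto
    moreover have "2 \<le> real n" using n2 by simp
    ultimately have "1 < \<alpha> * real n" by linarith
    hence Lp: "0 < L" unfolding L_def by (rule ln_gt_zero)
    have abound: "0 < a k \<and> 500 \<le> L * a k" if k: "1 \<le> k" "k \<le> n" for k
    proof -
      have "(A * real n) powr (- a k) \<le> (\<Sum>k=1..n. (A * real n) powr (- a_coef (mat_inv (Gam n)) k))"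
        unfolding a_def Psi_def using k by (intro member_le_sum) auto
      also have "\<dots> \<le> g A" using gsum[OF A1] n2 by simp
      finally have "(A * real n) powr (- a k) < exp (-1000)" using gA by simp
      moreover have "(A * real n) powr (- a k) = exp (- a k * ln (A * real n))"
        using A1 n2 by (simp add: powr_def)
      ultimately have h: "1000 < a k * ln (A * real n)" by simp
      have "1 * real n \<le> A * real n" using A1 by (intro mult_right_mono) auto
      moreover have "2 \<le> real n" using n2 by simp
      ultimately have "1 < A * real n" by linarith
      hence lnA: "0 < ln (A * real n)" by (rule ln_gt_zero)
      have apos: "0 < a k" using h lnA by (metis mult_nonpos_nonneg less_le_not_le less_trans not_le zero_less_numeral)
      have le: "ln (A * real n) \<le> 2 * L" unfolding L_def by (rule ln_le_2ln[OF A1 An assms(3) n2])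
      have "a k * ln (A * real n) \<le> a k * (2 * L)" using le apos by (intro mult_left_mono) auto
      moreover have "a k * (2 * L) = 2 * (L * a k)" by simp
      ultimately have "1000 < 2 * (L * a k)" using h by linarith
      thus ?thesis using apos by simp
    qed
    obtain U where U: "\<And>y. y \<in> carrier_vec n \<Longrightarrow>
        (\<Sum>k<n. a (Suc k) * (y $ k + (\<Sum>i<k. U k i * y $ i))^2) \<le> y \<bullet> (Gam n *\<^sub>v y)"
      using quad_bound_mat[of n "Gam n"] cc1[of n] n2 abound unfolding a_def Psi_def by fastforce
    define u where "u k = L * a (Suc k)" for k
    define T where "T = {- int q..int q}"
    define phi where "phi f = vec n (\<lambda>i. real_of_int (f i))" for f :: "nat \<Rightarrow> int"
    define h where "h y = exp (- ln (\<alpha> * real n) * (y \<bullet> (Gam n *\<^sub>v y)))" for y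
    have finPi: "finite (Pi\<^sub>E {..<n} (\<lambda>_. T))" unfolding T_def by (intro finite_PiE) auto
    have "(\<Sum>y\<in>M_set n q. h y) \<le> (\<Sum>y\<in>phi ` Pi\<^sub>E {..<n} (\<lambda>_. T). h y)"
      using M_set_sub[of n q] finPi unfolding phi_def T_def h_def by (intro sum_mono2) auto
    also have "\<dots> = (\<Sum>f\<in>Pi\<^sub>E {..<n} (\<lambda>_. T). h (phi f))"
    proof (rule sum.reindex[unfolded comp_def])
      show "inj_on phi (Pi\<^sub>E {..<n} (\<lambda>_. T))"
      proof (rule inj_onI)
        fix f f' assume f: "f \<in> Pi\<^sub>E {..<n} (\<lambda>_. T)" "f' \<in> Pi\<^sub>E {..<n} (\<lambda>_. T)" and e: "phi f = phi f'"
        have "f i = f' i" if "i \<in> {..<n}" for i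
          using arg_cong[OF e, of "\<lambda>v. v $ i"] that unfolding phi_def by simp
        thus "f = f'" using f by (intro PiE_ext) auto
      qed
    qed
    also have "\<dots> \<le> (\<Sum>f\<in>Pi\<^sub>E {..<n} (\<lambda>_. T). \<Prod>k<n. tterm u U k f)"
    proof (rule sum_mono)
      fix f assume "f \<in> Pi\<^sub>E {..<n} (\<lambda>_. T)"
      have pc: "phi f \<in> carrier_vec n" unfolding phi_def by simp
      have "h (phi f) \<le> exp (- L * (\<Sum>k<n. a (Suc k) * (phi f $ k + (\<Sum>i<k. U k i * phi f $ i))^2))"
        unfolding h_def L_def[symmetric] using U[OF pc] Lp by simp
      also have "(\<Sum>k<n. a (Suc k) * (phi f $ k + (\<Sum>i<k. U k i * phi f $ i))^2)
          = (\<Sum>k<n. a (Suc k) * (of_int (f k) + (\<Sum>i<k. U k i * of_int (f i)))^2)"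
        unfolding phi_def by (intro sum.cong refl) auto
      also have "exp (- L * \<dots>) = (\<Prod>k<n. tterm u U k f)"
        unfolding tterm_def u_def by (simp add: sum_distrib_left exp_sum[symmetric] sum_negf[symmetric] mult.assoc)
      finally show "h (phi f) \<le> (\<Prod>k<n. tterm u U k f)" .
    qed
    also have "\<dots> \<le> (\<Prod>k<n. exp (3 * exp (- u k)))"
      using abound unfolding u_def T_def by (intro iter_bound) auto
    also have "\<dots> = exp (3 * (\<Sum>k<n. exp (- u k)))" by (simp add: exp_sum sum_distrib_left)
    also have "(\<Sum>k<n. exp (- u k)) = (\<Sum>k=1..n. (\<alpha> * real n) powr (- a_coef (mat_inv (Gam n)) k))"
    proof -
      have "(\<Sum>k=1..n. (\<alpha> * real n) powr (- a_coef (mat_inv (Gam n)) k)) = (\<Sum>k<n. (\<alpha> * real n) powr (- a (Suc k)))"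
        unfolding a_def Psi_def using sum.atLeast1_atMost_eq[of "\<lambda>k. (\<alpha> * real n) powr (- a_coef (mat_inv (Gam n)) k)" n]
        by simp
      also have "\<dots> = (\<Sum>k<n. exp (- u k))"
        using assms(3) n2 unfolding u_def L_def by (intro sum.cong refl) (simp add: powr_def mult.commute)
      finally show ?thesis by simp
    qed
    also have "\<dots> \<le> g \<alpha>" using gsum[OF assms(3)] n2 by simp
    hence "exp (3 * (\<Sum>k=1..n. (\<alpha> * real n) powr (- a_coef (mat_inv (Gam n)) k))) \<le> exp (3 * g \<alpha>)" by simp
    also have "3 * g \<alpha> \<le> (2 + S) * g \<alpha>" using S1 gnn[OF assms(3)] by (intro mult_right_mono) auto
    finally show "(\<Sum>y\<in>M_set n q. exp (- ln (\<alpha> * real n) * (y \<bullet> (Gam n *\<^sub>v y)))) \<le> exp ((2 + S) * g \<alpha>)"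
      unfolding h_def by simp
  qed
qed


end
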